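(* Let $D$ be a database and let $Q$ queries be received. Let $\Omega_1,\ldots,\Omega_K$ be partitions of $D$ into pairwise disjoint sub-databases (of sizes $|\Omega_k|$). Suppose a proportion $p\in[0,1)$ of the $Q$ queries (namely $pQ$ of them) do not lie in any of the sigma-algebras generated by $\Omega_1,\ldots,\Omega_K$, while each of the remaining $(1-p)Q$ queries is a subset of some $\Omega_k$. Fix $\varepsilon>0$. The benchmark algorithm answers every query $A$ independently by $N(A)+\zeta_A$, $\zeta_A\sim\mathrm{Lap}(1/\varepsilon)$, with total privacy budget $Q\varepsilon$. The online sigma-counting algorithm answers each of the $pQ$ queries not in any sigma-algebra by $N(A)+\zeta_A$, $\zeta_A\sim\mathrm{Lap}(1/\varepsilon)$, and answers each query $A\subseteq\Omega_k$ by $\hat N(A)=\sum_{\omega\in A}\hat N(\omega)$, where independently for each $k$ and $\omega\in\Omega_k$, $\hat N(\omega)=\max(N(\omega)+\zeta_\omega,0)$, $\zeta_\omega\sim\mathrm{Lap}(1/\varepsilon')$, with $\varepsilon'=(1-p)Q\varepsilon/\sum_{k=1}^K|\Omega_k|$, so that its total privacy budget $\sum_k|\Omega_k|\varepsilon'+pQ\varepsilon$ equals $Q\varepsilon$. If $$Q>\frac{\bigl(\sum_{k=1}^K|\Omega_k|\bigr)\sqrt{\max_{1\le k\le K}|\Omega_k|}}{1-p},$$ then the online sigma-counting algorithm has strictly larger utility on the $Q$ queries than the benchmark algorithm.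
   Context: $N(A)$ denotes the true number of rows in the sub-database corresponding to $A$. $\mathrm{Lap}(\lambda)$ is the Laplace distribution with density $(2\lambda)^{-1}e^{-|x|/\lambda}$. The privacy budget is the total differential-privacy parameter by sequential composition (each $\mathrm{Lap}(1/\varepsilon)$ count mechanism contributes $\varepsilon$). The utility of an algorithm on a finite query set $\mathcal F$ is $\mathcal U=\frac{1}{\mathrm{card}(\mathcal F)}\sum_{A\in\mathcal F}\frac{2}{\mathrm{Var}(\hat N(A)\mid N(A))}$. *)

theory Defs
  imports "HOL-Probability.Probability"
begin

definition nrows :: "'d multiset \<Rightarrow> 'd set \<Rightarrow> nat" where
  "nrows D A = size (filter_mset (\<lambda>x. x \<in> A) D)"

definition laplace_density :: "real \<Rightarrow> real \<Rightarrow> real" where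
  "laplace_density l x = exp (- \<bar>x\<bar> / l) / (2 * l)"

definition lap :: "real \<Rightarrow> real measure" where
  "lap l = density lborel (\<lambda>x. ennreal (laplace_density l x))"

definition Var :: "'a measure \<Rightarrow> ('a \<Rightarrow> real) \<Rightarrow> real" where
  "Var M X = (\<integral>x. (X x - (\<integral>y. X y \<partial>M))\<^sup>2 \<partial>M)"

definition bench_var :: "'d multiset \<Rightarrow> real \<Rightarrow> 'd set \<Rightarrow> real" where
  "bench_var D eps A = Var (lap (1 / eps)) (\<lambda>z. real (nrows D A) + z)"

text \<open>Blocks of the partition Om contained in the query A (A is a union of these).\<close>
definition blocks_of :: "'d set set \<Rightarrow> 'd set \<Rightarrow> 'd set set" where
  "blocks_of Om A = {w \<in> Om. w \<subseteq> A}"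

definition sigma_var :: "'d multiset \<Rightarrow> real \<Rightarrow> 'd set set \<Rightarrow> 'd set \<Rightarrow> real" where
  "sigma_var D eps' Om A =
     Var (PiM (blocks_of Om A) (\<lambda>_. lap (1 / eps')))
         (\<lambda>z. \<Sum>w\<in>blocks_of Om A. max (real (nrows D w) + z w) 0)"

end

theory Submission imports Defs begin

lemma lapd_nonneg: "l > 0 \<Longrightarrow> 0 \<le> laplace_density l x"
  by (simp add: laplace_density_def)

lemma lapd_meas[measurable]: "laplace_density l \<in> borel_measurable borel"
  unfolding laplace_density_def[abs_def] by measurable

lemma lap_nn_moment:
  assumes l: "l > 0"
  shows "(\<integral>\<^sup>+x. ennreal (laplace_density l x * \<bar>x\<bar>^i) \<partial>lborel) = ennreal (fact i * l^i)"
proof -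
  define e where "e x = erlang_density 0 (1/l) x * x^i" for x
  have e_nn: "0 \<le> e x" for x using l by (simp add: e_def erlang_density_def)
  have e_meas[measurable]: "e \<in> borel_measurable borel" unfolding e_def[abs_def] by measurable
  have eqAE: "AE x in lborel. ennreal (laplace_density l x * \<bar>x\<bar>^i)
      = ennreal (1/2) * (ennreal (e x) + ennreal (e (0 + (-1) * x)))"
  proof (rule eventually_mono[OF AE_lborel_singleton[of 0]])
    fix x :: real assume x: "x \<noteq> 0"
    have "laplace_density l x * \<bar>x\<bar>^i = (1/2) * (e x + e (0 + (-1)*x))"
    proof (cases "x > 0")
      case True then show ?thesis
        by (simp add: e_def erlang_density_def laplace_density_def field_simps)
    next
      case False
      with x have "x < 0" by simp
      then show ?thesis
        by (simp add: e_def erlang_density_def laplace_density_def field_simps power_minus')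
    qed
    then show "ennreal (laplace_density l x * \<bar>x\<bar>^i) = ennreal (1/2) * (ennreal (e x) + ennreal (e (0 + (-1) * x)))"
      using e_nn[of x] e_nn[of "0 + (-1)*x"] by (simp only: ennreal_mult'' ennreal_plus)
  qed
  have "(\<integral>\<^sup>+x. ennreal (laplace_density l x * \<bar>x\<bar>^i) \<partial>lborel)
      = (\<integral>\<^sup>+x. ennreal (1/2) * (ennreal (e x) + ennreal (e (0 + (-1) * x))) \<partial>lborel)"
    by (rule nn_integral_cong_AE[OF eqAE])
  also have "\<dots> = ennreal (1/2) * ((\<integral>\<^sup>+x. ennreal (e x) \<partial>lborel) + (\<integral>\<^sup>+x. ennreal (e (0 + (-1) * x)) \<partial>lborel))"
    by (simp add: nn_integral_cmult nn_integral_add)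
  also have "(\<integral>\<^sup>+x. ennreal (e (0 + (-1) * x)) \<partial>lborel) = (\<integral>\<^sup>+x. ennreal (e x) \<partial>lborel)"
    using nn_integral_real_affine[of "\<lambda>x. ennreal (e x)" "-1" 0] by simp
  also have "(\<integral>\<^sup>+x. ennreal (e x) \<partial>lborel) = ennreal (fact i * l^i)"
    using nn_integral_erlang_ith_moment[of "1/l" 0 i] l by (simp add: e_def power_one_over)
  also have "ennreal (1/2) * (ennreal (fact i * l^i) + ennreal (fact i * l^i)) = ennreal (fact i * l^i)"
  proof -
    have "ennreal (1/2) * (ennreal (fact i * l^i) + ennreal (fact i * l^i)) = ennreal (1/2 * (fact i * l^i + fact i * l^i))"
      using l by (metis ennreal_mult'' ennreal_plus add_nonneg_nonneg fact_ge_zero zero_le_power less_imp_le mult_nonneg_nonneg)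
    then show ?thesis by simp
  qed
  finally show ?thesis .
qed

lemma lap_integrable_lborel:
  assumes l: "l > 0"
  shows "integrable lborel (\<lambda>x. laplace_density l x * x^i)"
proof (rule integrableI_bounded)
  show "(\<lambda>x. laplace_density l x * x^i) \<in> borel_measurable lborel" by measurable
  have "(\<integral>\<^sup>+x. ennreal (norm (laplace_density l x * x^i)) \<partial>lborel)
      = (\<integral>\<^sup>+x. ennreal (laplace_density l x * \<bar>x\<bar>^i) \<partial>lborel)"
    using lapd_nonneg[OF l] by (intro nn_integral_cong) (simp add: abs_mult power_abs)
  also have "\<dots> < \<infinity>" using lap_nn_moment[OF l] by simp
  finally show "(\<integral>\<^sup>+x. ennreal (norm (laplace_density l x * x^i)) \<partial>lborel) < \<infinity>" .
qed

lemma lap_prob: assumes l: "l > 0" shows "prob_space (lap l)"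
proof (rule prob_spaceI)
  have "emeasure (lap l) (space (lap l)) = (\<integral>\<^sup>+x. ennreal (laplace_density l x) \<partial>lborel)"
    unfolding lap_def by (simp add: emeasure_density)
  also have "\<dots> = 1" using lap_nn_moment[OF l, of 0] by simp
  finally show "emeasure (lap l) (space (lap l)) = 1" .
qed

lemma lap_integrable_iff:
  assumes l: "l > 0" and f[measurable]: "f \<in> borel_measurable borel"
  shows "integrable (lap l) f \<longleftrightarrow> integrable lborel (\<lambda>x. laplace_density l x * f x)"
  unfolding lap_def using lapd_nonneg[OF l]
  by (subst integrable_density) auto

lemma lap_integral:
  assumes l: "l > 0" and f[measurable]: "f \<in> borel_measurable borel"
  shows "integral\<^sup>L (lap l) f = (\<integral>x. laplace_density l x * f x \<partial>lborel)"
  unfolding lap_def using lapd_nonneg[OF l]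
  by (subst integral_density) auto

lemma lap_integrable_pow:
  assumes l: "l > 0" shows "integrable (lap l) (\<lambda>x. x^i)"
  using lap_integrable_lborel[OF l] by (subst lap_integrable_iff[OF l]) auto

lemma lap_integrable_id:
  assumes l: "l > 0" shows "integrable (lap l) (\<lambda>x. x)"
  using lap_integrable_pow[OF l, of 1] by simp

lemma lap_mean:
  assumes l: "l > 0" shows "integral\<^sup>L (lap l) (\<lambda>x. x) = 0"
proof -
  let ?f = "\<lambda>x. laplace_density l x * x"
  have "(\<integral>x. ?f x \<partial>lborel) = \<bar>-1\<bar> *\<^sub>R (\<integral>x. ?f (0 + (-1) * x) \<partial>lborel)"
    by (rule lborel_integral_real_affine) simp
  also have "\<dots> = - (\<integral>x. ?f x \<partial>lborel)"
    by (simp add: laplace_density_def)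
  finally have "(\<integral>x. ?f x \<partial>lborel) = 0" by simp
  then show ?thesis using lap_integral[OF l, of "\<lambda>x. x"] by simp
qed

lemma lap_second:
  assumes l: "l > 0" shows "integral\<^sup>L (lap l) (\<lambda>x. x^2) = 2 * l^2"
proof -
  have "integral\<^sup>L (lap l) (\<lambda>x. x^2) = (\<integral>x. laplace_density l x * \<bar>x\<bar>^2 \<partial>lborel)"
    using lap_integral[OF l, of "\<lambda>x. x^2"] by simp
  also have "\<dots> = enn2real (\<integral>\<^sup>+x. ennreal (laplace_density l x * \<bar>x\<bar>^2) \<partial>lborel)"
    using lapd_nonneg[OF l] by (intro integral_eq_nn_integral) auto
  also have "\<dots> = 2 * l^2" using lap_nn_moment[OF l, of 2] l by simp
  finally show ?thesis .
qed

lemma lap_var_shift: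
  assumes l: "l > 0" shows "Var (lap l) (\<lambda>z. c + z) = 2 * l^2"
proof -
  interpret prob_space "lap l" by (rule lap_prob[OF l])
  have m: "integral\<^sup>L (lap l) (\<lambda>z. c + z) = c"
    using lap_integrable_id[OF l] lap_mean[OF l] by (simp add: integral_add prob_space)
  show ?thesis unfolding Var_def m using lap_second[OF l] by simp
qed

lemma lap_var_max:
  assumes l: "l > 0" and c: "c \<ge> 0"
  shows "Var (lap l) (\<lambda>z. max (c + z) 0) \<le> 2 * l^2"
    and "Var (lap l) (\<lambda>z. max (c + z) 0) > 0"
    and "integrable (lap l) (\<lambda>z. max (c + z) 0)"
    and "integrable (lap l) (\<lambda>z. (max (c + z) 0)^2)"
proof -
  interpret prob_space "lap l" by (rule lap_prob[OF l])
  let ?g = "\<lambda>z. max (c + z) (0::real)"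
  have sl[simp]: "space (lap l) = UNIV" by (simp add: lap_def)
  have i1: "integrable (lap l) (\<lambda>z. x) " for x by simp
  have i2: "integrable (lap l) (\<lambda>z. z^2)" by (rule lap_integrable_pow[OF l])
  have iz: "integrable (lap l) (\<lambda>z. z)" by (rule lap_integrable_id[OF l])
  have mg[measurable]: "?g \<in> borel_measurable (lap l)" by (simp add: lap_def)
  have ig: "integrable (lap l) ?g"
  proof (rule Bochner_Integration.integrable_bound[where f="\<lambda>z. c + \<bar>z\<bar>"])
    show "integrable (lap l) (\<lambda>z. c + \<bar>z\<bar>)" using iz by auto
    show "AE z in lap l. norm (?g z) \<le> norm (c + \<bar>z\<bar>)" using c by auto
  qed simp
  have ig2: "integrable (lap l) (\<lambda>z. (?g z)^2)"
  proof (rule Bochner_Integration.integrable_bound[where f="\<lambda>z. 2*c^2 + 2*z^2"])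
    show "integrable (lap l) (\<lambda>z. 2*c^2 + 2*z^2)" using i2 by auto
    show "AE z in lap l. norm ((?g z)^2) \<le> norm (2*c^2 + 2*z^2)"
    proof (rule AE_I2)
      fix z :: real
      have "(?g z)^2 \<le> (c + \<bar>z\<bar>)^2" using c
        by (intro power_mono) auto
      also have "\<dots> \<le> 2*c^2 + 2*z^2" using sum_squares_ge_zero
        by (smt (verit) power2_abs power2_sum zero_le_power2 abs_ge_zero power2_diff)
      finally show "norm ((?g z)^2) \<le> norm (2*c^2 + 2*z^2)" by simp
    qed
  qed simp
  show "integrable (lap l) ?g" by (rule ig)
  show "integrable (lap l) (\<lambda>z. (?g z)^2)" by (rule ig2)
  define m where "m = integral\<^sup>L (lap l) ?g"
  have V: "Var (lap l) ?g = integral\<^sup>L (lap l) (\<lambda>z. (?g z)^2) - m^2"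
    unfolding Var_def m_def[symmetric] using variance_eq[OF ig ig2] m_def by simp
  have "integral\<^sup>L (lap l) (\<lambda>z. (?g z - c)^2) = integral\<^sup>L (lap l) (\<lambda>z. (?g z)^2 - 2*c*?g z + c^2)"
    by (intro Bochner_Integration.integral_cong) (auto simp: power2_diff)
  also have "\<dots> = integral\<^sup>L (lap l) (\<lambda>z. (?g z)^2) - 2*c*m + c^2"
    using ig ig2 prob_space by (simp add: m_def)
  finally have E1: "integral\<^sup>L (lap l) (\<lambda>z. (?g z - c)^2) = integral\<^sup>L (lap l) (\<lambda>z. (?g z)^2) - 2*c*m + c^2" .
  have "integral\<^sup>L (lap l) (\<lambda>z. (?g z - c)^2) \<le> integral\<^sup>L (lap l) (\<lambda>z. z^2)"
  proof (rule integral_mono)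
    show "integrable (lap l) (\<lambda>z. (?g z - c)^2)"
      using ig ig2 by (simp add: power2_diff)
    show "integrable (lap l) (\<lambda>z. z^2)" by (rule i2)
    fix z :: real
    have "\<bar>?g z - c\<bar> \<le> \<bar>z\<bar>" using c by auto
    then show "(?g z - c)^2 \<le> z^2"
      by (metis abs_ge_zero power2_abs power_mono)
  qed
  with E1 lap_second[OF l] have "integral\<^sup>L (lap l) (\<lambda>z. (?g z)^2) - 2*c*m + c^2 \<le> 2*l^2" by simp
  moreover have "0 \<le> (m - c)^2" by simp
  ultimately show "Var (lap l) ?g \<le> 2 * l^2" unfolding V by (simp add: power2_diff algebra_simps)
  show "Var (lap l) ?g > 0"
  proof (rule ccontr)
    assume "\<not> Var (lap l) ?g > 0"
    moreover have "Var (lap l) ?g \<ge> 0" unfolding Var_def by simp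
    ultimately have "Var (lap l) ?g = 0" by simp
    then have "integral\<^sup>L (lap l) (\<lambda>z. (?g z - m)^2) = 0" unfolding Var_def m_def .
    moreover have "integrable (lap l) (\<lambda>z. (?g z - m)^2)"
      using ig ig2 by (simp add: power2_diff)
    ultimately have "AE z in lap l. (?g z - m)^2 = 0"
      by (subst integral_nonneg_eq_0_iff_AE[symmetric]) auto
    then have AE0: "AE z in lborel. 0 < laplace_density l z \<longrightarrow> (?g z - m)^2 = 0"
      unfolding lap_def by (subst (asm) AE_density) auto
    have pos: "0 < laplace_density l z" for z using l by (simp add: laplace_density_def)
    from AE0 have AE: "AE z in lborel. z \<notin> {\<bar>m\<bar>+1 .. \<bar>m\<bar>+2}"
    proof eventually_elim
      fix z :: real assume h: "0 < laplace_density l z \<longrightarrow> (?g z - m)^2 = 0"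
      then have "?g z = m" using pos[of z] by simp
      then show "z \<notin> {\<bar>m\<bar>+1 .. \<bar>m\<bar>+2}" using c by auto
    qed
    have "emeasure lborel {\<bar>m\<bar>+1 .. \<bar>m\<bar>+2} = 0"
      using AE by (subst (asm) AE_iff_measurable[where N="{\<bar>m\<bar>+1 .. \<bar>m\<bar>+2}"]) auto
    then show False by simp
  qed
qed


lemma (in product_prob_space) PiM_int1:
  fixes a :: "'a \<Rightarrow> real"
  assumes J: "finite J" "i \<in> J" and a: "integrable (M i) a"
  shows "integrable (PiM J M) (\<lambda>x. a (x i))"
    and "integral\<^sup>L (PiM J M) (\<lambda>x. a (x i)) = integral\<^sup>L (M i) a"
proof -
  define F where "F k = (if k = i then a else (\<lambda>_. 1::real))" for k
  have FI: "k \<in> J \<Longrightarrow> integrable (M k) (F k)" for k using a by (simp add: F_def)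
  have P: "(\<Prod>k\<in>J. F k (x k)) = a (x i)" for x
  proof -
    have "(\<Prod>k\<in>J. F k (x k)) = (\<Prod>k\<in>{i}. F k (x k))"
      using J by (intro prod.mono_neutral_right) (auto simp: F_def)
    then show ?thesis by (simp add: F_def)
  qed
  show "integrable (PiM J M) (\<lambda>x. a (x i))"
    using product_integrable_prod[OF J(1) FI] unfolding P .
  have "integral\<^sup>L (PiM J M) (\<lambda>x. a (x i)) = (\<Prod>k\<in>J. integral\<^sup>L (M k) (F k))"
    using product_integral_prod[OF J(1) FI] unfolding P .
  also have "\<dots> = (\<Prod>k\<in>{i}. integral\<^sup>L (M k) (F k))"
    using J by (intro prod.mono_neutral_right) (auto simp: F_def M.prob_space)
  finally show "integral\<^sup>L (PiM J M) (\<lambda>x. a (x i)) = integral\<^sup>L (M i) a" by (simp add: F_def)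
qed

lemma (in product_prob_space) PiM_int2:
  fixes a b :: "'a \<Rightarrow> real"
  assumes J: "finite J" "i \<in> J" "j \<in> J" "i \<noteq> j" and a: "integrable (M i) a" and b: "integrable (M j) b"
  shows "integrable (PiM J M) (\<lambda>x. a (x i) * b (x j))"
    and "integral\<^sup>L (PiM J M) (\<lambda>x. a (x i) * b (x j)) = integral\<^sup>L (M i) a * integral\<^sup>L (M j) b"
proof -
  define F where "F k = (if k = i then a else if k = j then b else (\<lambda>_. 1::real))" for k
  have FI: "k \<in> J \<Longrightarrow> integrable (M k) (F k)" for k using a b by (simp add: F_def)
  have P: "(\<Prod>k\<in>J. F k (x k)) = a (x i) * b (x j)" for x
  proof -
    have "(\<Prod>k\<in>J. F k (x k)) = (\<Prod>k\<in>{i,j}. F k (x k))"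
      using J by (intro prod.mono_neutral_right) (auto simp: F_def)
    then show ?thesis using J by (simp add: F_def)
  qed
  show "integrable (PiM J M) (\<lambda>x. a (x i) * b (x j))"
    using product_integrable_prod[OF J(1) FI] unfolding P .
  have "integral\<^sup>L (PiM J M) (\<lambda>x. a (x i) * b (x j)) = (\<Prod>k\<in>J. integral\<^sup>L (M k) (F k))"
    using product_integral_prod[OF J(1) FI] unfolding P .
  also have "\<dots> = (\<Prod>k\<in>{i,j}. integral\<^sup>L (M k) (F k))"
    using J by (intro prod.mono_neutral_right) (auto simp: F_def M.prob_space)
  finally show "integral\<^sup>L (PiM J M) (\<lambda>x. a (x i) * b (x j)) = integral\<^sup>L (M i) a * integral\<^sup>L (M j) b"
    using J by (simp add: F_def)
qed

lemma (in product_prob_space) Var_PiM_sum: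
  fixes f :: "'i \<Rightarrow> 'a \<Rightarrow> real"
  assumes J: "finite J" and f: "\<And>i. i \<in> J \<Longrightarrow> integrable (M i) (f i)"
    and f2: "\<And>i. i \<in> J \<Longrightarrow> integrable (M i) (\<lambda>x. (f i x)^2)"
  shows "Var (PiM J M) (\<lambda>x. \<Sum>i\<in>J. f i (x i)) = (\<Sum>i\<in>J. Var (M i) (f i))"
proof -
  define c where "c i = integral\<^sup>L (M i) (f i)" for i
  define h where "h i = (\<lambda>y. f i y - c i)" for i
  have hI: "i \<in> J \<Longrightarrow> integrable (M i) (h i)" for i using f by (simp add: h_def)
  have h0: "i \<in> J \<Longrightarrow> integral\<^sup>L (M i) (h i) = 0" for i
    using f by (simp add: h_def c_def M.prob_space)
  have h2: "i \<in> J \<Longrightarrow> integrable (M i) (\<lambda>y. h i y * h i y)" for i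
    using f f2 by (simp add: h_def algebra_simps power2_eq_square)
  have E: "integral\<^sup>L (PiM J M) (\<lambda>x. \<Sum>i\<in>J. f i (x i)) = (\<Sum>i\<in>J. c i)"
  proof -
    have "integral\<^sup>L (PiM J M) (\<lambda>x. \<Sum>i\<in>J. f i (x i)) = (\<Sum>i\<in>J. integral\<^sup>L (PiM J M) (\<lambda>x. f i (x i)))"
      by (rule Bochner_Integration.integral_sum) (auto intro: PiM_int1(1)[OF J] f)
    also have "\<dots> = (\<Sum>i\<in>J. c i)"
      using f PiM_int1(2)[OF J] by (intro sum.cong) (auto simp: c_def)
    finally show ?thesis .
  qed
  have sq: "((\<Sum>i\<in>J. f i (x i)) - (\<Sum>i\<in>J. c i))^2 = (\<Sum>i\<in>J. \<Sum>j\<in>J. h i (x i) * h j (x j))" for x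
    by (simp add: power2_eq_square sum_subtractf[symmetric] h_def sum_product)
  have T: "integral\<^sup>L (PiM J M) (\<lambda>x. h i (x i) * h j (x j)) = (if i = j then Var (M i) (f i) else 0)"
    if "i \<in> J" "j \<in> J" for i j
  proof (cases "i = j")
    case True
    then show ?thesis using PiM_int1(2)[OF J \<open>i \<in> J\<close> h2[OF \<open>i \<in> J\<close>]] \<open>i \<in> J\<close>
      by (simp add: Var_def h_def c_def power2_eq_square)
  next
    case False
    then show ?thesis using PiM_int2(2)[OF J that False hI hI] h0 that by simp
  qed
  have TI: "integrable (PiM J M) (\<lambda>x. h i (x i) * h j (x j))" if "i \<in> J" "j \<in> J" for i j
  proof (cases "i = j")
    case True
    then show ?thesis using PiM_int1(1)[OF J \<open>i \<in> J\<close> h2[OF \<open>i \<in> J\<close>]] by simp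
  next
    case False
    then show ?thesis using PiM_int2(1)[OF J that False hI hI] that by simp
  qed
  have "Var (PiM J M) (\<lambda>x. \<Sum>i\<in>J. f i (x i))
      = integral\<^sup>L (PiM J M) (\<lambda>x. \<Sum>i\<in>J. \<Sum>j\<in>J. h i (x i) * h j (x j))"
    unfolding Var_def E sq ..
  also have "\<dots> = (\<Sum>i\<in>J. \<Sum>j\<in>J. integral\<^sup>L (PiM J M) (\<lambda>x. h i (x i) * h j (x j)))"
    using TI by (simp add: Bochner_Integration.integral_sum)
  also have "\<dots> = (\<Sum>i\<in>J. \<Sum>j\<in>J. (if i = j then Var (M i) (f i) else 0))"
    using T by (intro sum.cong) auto
  also have "\<dots> = (\<Sum>i\<in>J. Var (M i) (f i))"
    using J by simp
  finally show ?thesis .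
qed


lemma sigma_var_bounds:
  assumes e: "e > 0" and fin: "finite (blocks_of Om A)" and ne: "blocks_of Om A \<noteq> {}"
  shows "0 < sigma_var D e Om A" "sigma_var D e Om A \<le> real (card (blocks_of Om A)) * (2 / e^2)"
proof -
  let ?B = "blocks_of Om A"
  let ?l = "1 / e"
  have l: "?l > 0" using e by simp
  interpret P: product_prob_space "\<lambda>_. lap ?l" ?B
  proof -
    interpret prob_space "lap ?l" by (rule lap_prob[OF l])
    show "product_prob_space (\<lambda>_. lap ?l)"
      by unfold_locales
  qed
  have V: "sigma_var D e Om A = (\<Sum>w\<in>?B. Var (lap ?l) (\<lambda>z. max (real (nrows D w) + z) 0))"
    unfolding sigma_var_def
    using P.Var_PiM_sum[OF fin, of "\<lambda>w z. max (real (nrows D w) + z) 0"] lap_var_max[OF l] by simp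
  have "(\<Sum>w\<in>?B. Var (lap ?l) (\<lambda>z. max (real (nrows D w) + z) 0)) > 0"
    using lap_var_max(2)[OF l] fin ne by (intro sum_pos) auto
  then show "0 < sigma_var D e Om A" using V by simp
  have "(\<Sum>w\<in>?B. Var (lap ?l) (\<lambda>z. max (real (nrows D w) + z) 0)) \<le> (\<Sum>w\<in>?B. 2 * ?l^2)"
    using lap_var_max(1)[OF l] by (intro sum_mono) auto
  then show "sigma_var D e Om A \<le> real (card ?B) * (2 / e^2)" using V by (simp add: power_one_over)
qed

lemma bench_var_eq: "eps > 0 \<Longrightarrow> bench_var D eps A = 2 / eps^2"
  unfolding bench_var_def using lap_var_shift[of "1/eps"] by (simp add: power_one_over)

lemma sigma_sets_blocks:
  assumes "A \<in> sigma_sets X Om"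
    and disj: "\<And>w w'. w \<in> Om \<Longrightarrow> w' \<in> Om \<Longrightarrow> w \<noteq> w' \<Longrightarrow> w \<inter> w' = {}"
    and cov: "\<Union>Om = X"
  shows "\<forall>x\<in>A. \<forall>w\<in>Om. x \<in> w \<longrightarrow> w \<subseteq> A"
  using assms(1)
proof induct
  case (Basic a)
  then show ?case using disj by blast
next
  case Empty
  then show ?case by simp
next
  case (Compl a)
  show ?case
  proof (intro ballI impI)
    fix x w assume x: "x \<in> X - a" and w: "w \<in> Om" "x \<in> w"
    show "w \<subseteq> X - a"
    proof
      fix y assume y: "y \<in> w"
      have "y \<in> X" using y w cov by blast
      moreover have "y \<notin> a" using Compl.hyps(2) x w y by blast
      ultimately show "y \<in> X - a" by blast
    qed
  qed
next
  case (Union a)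
  then show ?case by blast
qed


theorem theorem4:
  fixes D :: "'d multiset" and X :: "'d set"
    and Om :: "nat \<Rightarrow> 'd set set" and K :: nat
    and qs :: "'d set list" and kq :: "nat \<Rightarrow> nat"
    and eps p :: real
  defines "Q \<equiv> length qs"
  defines "S \<equiv> (\<Sum>k=1..K. card (Om k))"
  defines "NS \<equiv> {i. i < Q \<and> \<not> (\<exists>k\<in>{1..K}. qs ! i \<in> sigma_sets X (Om k))}"
  defines "eps' \<equiv> (1 - p) * real Q * eps / real S"
  assumes DX: "set_mset D \<subseteq> X"
    and K: "K \<ge> 1"
    and part_fin: "\<And>k. k \<in> {1..K} \<Longrightarrow> finite (Om k)"
    and part_ne: "\<And>k w. k \<in> {1..K} \<Longrightarrow> w \<in> Om k \<Longrightarrow> w \<noteq> {}"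
    and part_disj: "\<And>k w w'. k \<in> {1..K} \<Longrightarrow> w \<in> Om k \<Longrightarrow> w' \<in> Om k \<Longrightarrow> w \<noteq> w' \<Longrightarrow> w \<inter> w' = {}"
    and part_cover: "\<And>k. k \<in> {1..K} \<Longrightarrow> \<Union>(Om k) = X"
    and p_def: "p = real (card NS) / real Q"
    and p_lt: "p < 1"
    and kq: "\<And>i. i < Q \<Longrightarrow> i \<notin> NS \<Longrightarrow>
               kq i \<in> {1..K} \<and> qs ! i \<in> sigma_sets X (Om (kq i)) \<and> qs ! i \<noteq> {}"
    and eps: "eps > 0"
    and Qbig: "real Q > real S * sqrt (real (Max ((\<lambda>k. card (Om k)) ` {1..K}))) / (1 - p)"
  shows "(1 / real Q) * (\<Sum>i<Q. 2 / (if i \<in> NS then bench_var D eps (qs ! i)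
                                     else sigma_var D eps' (Om (kq i)) (qs ! i)))
         > (1 / real Q) * (\<Sum>i<Q. 2 / bench_var D eps (qs ! i))"
proof -
  have Qpos: "Q > 0"
  proof (rule ccontr)
    assume "\<not> Q > 0"
    then have "Q = 0" by simp
    then have "p = 0" using p_def by simp
    have "real S * sqrt (real (Max ((\<lambda>k. card (Om k)) ` {1..K}))) / (1 - p) \<ge> 0"
      using \<open>p = 0\<close> by simp
    with Qbig \<open>Q = 0\<close> show False by simp
  qed
  have NSsub: "NS \<subseteq> {..<Q}" unfolding NS_def by auto
  have "real (card NS) < real Q" using p_lt p_def Qpos by (simp add: divide_less_eq)
  then have "card NS < card {..<Q}" by simp
  then obtain i0 where i0: "i0 < Q" "i0 \<notin> NS"
  proof -
    have "NS \<noteq> {..<Q}" using \<open>card NS < card {..<Q}\<close> by auto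
    then obtain i where "i \<in> {..<Q}" "i \<notin> NS" using NSsub by blast
    then show ?thesis using that by auto
  qed
  define Mx where "Mx = Max ((\<lambda>k. card (Om k)) ` {1..K})"
  have onep: "1 - p > 0" using p_lt by simp
  have key: "2 / sigma_var D eps' (Om (kq i)) (qs ! i) > 2 / bench_var D eps (qs ! i)"
    if i: "i < Q" "i \<notin> NS" for i
  proof -
    define k where "k = kq i"
    define A where "A = qs ! i"
    have k: "k \<in> {1..K}" and A: "A \<in> sigma_sets X (Om k)" and Ane: "A \<noteq> {}"
      using kq[OF i] by (auto simp: k_def A_def)
    have cov: "\<Union>(Om k) = X" using part_cover[OF k] .
    have AX: "A \<subseteq> X"
      using sigma_sets_into_sp[of "Om k" X] A cov by blast
    obtain x where x: "x \<in> A" using Ane by blast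
    then obtain w where w: "w \<in> Om k" "x \<in> w" using AX cov by blast
    have "w \<subseteq> A" using sigma_sets_blocks[OF A part_disj[OF k] cov] x w by blast
    then have wB: "w \<in> blocks_of (Om k) A" using w by (simp add: blocks_of_def)
    have Bsub: "blocks_of (Om k) A \<subseteq> Om k" by (auto simp: blocks_of_def)
    have finB: "finite (blocks_of (Om k) A)" using finite_subset[OF Bsub part_fin[OF k]] .
    have neB: "blocks_of (Om k) A \<noteq> {}" using wB by blast
    define m where "m = card (blocks_of (Om k) A)"
    have m1: "m \<ge> 1" using finB neB by (simp add: m_def Suc_le_eq card_gt_0_iff)
    have mle: "m \<le> card (Om k)" unfolding m_def using card_mono[OF part_fin[OF k] Bsub] .
    have cle: "card (Om k) \<le> Mx" unfolding Mx_def using k by (intro Max_ge) auto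
    have cS: "card (Om k) \<le> S" unfolding S_def
      using k by (intro member_le_sum) auto
    have Spos: "real S > 0" using m1 mle cS by simp
    have epos: "eps' > 0" unfolding eps'_def using onep Qpos eps Spos by simp
    have "sqrt (real m) \<le> sqrt (real Mx)" using mle cle by simp
    also have "sqrt (real Mx) < (1 - p) * real Q / real S"
      using Qbig onep Spos unfolding Mx_def[symmetric] by (simp add: field_simps)
    also have "\<dots> = eps' / eps" unfolding eps'_def using eps by simp
    finally have "sqrt (real m) < eps' / eps" .
    then have "(sqrt (real m))^2 < (eps' / eps)^2" by (intro power_strict_mono) auto
    then have meps: "real m * eps^2 < eps'^2" using eps by (simp add: field_simps)
    have sv: "0 < sigma_var D eps' (Om k) A" "sigma_var D eps' (Om k) A \<le> real m * (2 / eps'^2)"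
      using sigma_var_bounds[OF epos finB neB] by (simp_all add: m_def)
    have "real m * (2 / eps'^2) < 2 / eps^2"
      using meps eps epos by (simp add: field_simps)
    then have "sigma_var D eps' (Om k) A < 2 / eps^2" using sv(2) by linarith
    then have "2 / (2 / eps^2) < 2 / sigma_var D eps' (Om k) A"
      using sv(1) eps by (intro divide_strict_left_mono) auto
    moreover have "2 / bench_var D eps (qs ! i) = eps^2" unfolding bench_var_eq[OF eps] using eps by simp
    ultimately show ?thesis using eps by (simp add: k_def A_def)
  qed
  have "(\<Sum>i<Q. 2 / bench_var D eps (qs ! i)) <
        (\<Sum>i<Q. 2 / (if i \<in> NS then bench_var D eps (qs ! i)
                                     else sigma_var D eps' (Om (kq i)) (qs ! i)))"
  proof (rule sum_strict_mono_ex1)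
    show "\<forall>i\<in>{..<Q}. 2 / bench_var D eps (qs ! i) \<le> 2 / (if i \<in> NS then bench_var D eps (qs ! i)
                                     else sigma_var D eps' (Om (kq i)) (qs ! i))"
      using key by (auto intro: less_imp_le)
    show "\<exists>i\<in>{..<Q}. 2 / bench_var D eps (qs ! i) < 2 / (if i \<in> NS then bench_var D eps (qs ! i)
                                     else sigma_var D eps' (Om (kq i)) (qs ! i))"
      using key[OF i0] i0 by auto
  qed simp
  then show ?thesis using Qpos by (intro mult_strict_left_mono) auto
qed

end
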